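(* Let $\Gamma$ be a group and let $A$ be a set. Then the map $\Psi \colon \mathcal{N}(\Gamma) \to \mathcal{P}(A^\Gamma)$ defined by $\Psi(N) = \mathrm{Fix}(N)$ is uniformly continuous. Moreover, if $A$ contains at least two elements, then $\Psi$ is a uniform embedding.
   Context: $\mathcal{N}(\Gamma)$ is the set of normal subgroups of $\Gamma$, with the uniform structure induced from the prodiscrete uniform structure on $\mathcal{P}(\Gamma) = \{0,1\}^\Gamma$ (a base of entourages is $\{(N_1,N_2) : N_1 \cap F = N_2 \cap F\}$, $F \subset \Gamma$ finite). $A^\Gamma$ carries the prodiscrete uniform structure and the shift $(\gamma x)(\alpha) = x(\gamma^{-1}\alpha)$, and $\mathrm{Fix}(N) = \{x \in A^\Gamma : \gamma x = x \ \forall \gamma \in N\}$. $\mathcal{P}(A^\Gamma)$ carries the Hausdorff-Bourbaki uniform structure, which has as a base the sets $\widehat{V} = \{(B,C) : C \subset V[B] \text{ and } B \subset V[C]\}$, $V$ an entourage of $A^\Gamma$, where $V[B] = \{x : (x,b) \in V \text{ for some } b \in B\}$. A uniform embedding is an injective map inducing a uniform isomorphism onto its image. *)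

theory Defs
  imports Main "HOL-Library.FuncSet"
begin

text \<open>The group \<Gamma> is a type of class group_add (written additively, not necessarily
commutative); the alphabet A is an arbitrary set A :: 'a set.\<close>

definition normal_subgroups :: "'g::group_add set set" where
  "normal_subgroups = {N. 0 \<in> N \<and> (\<forall>x\<in>N. \<forall>y\<in>N. x + y \<in> N) \<and> (\<forall>x\<in>N. - x \<in> N)
       \<and> (\<forall>g. \<forall>n\<in>N. g + n - g \<in> N)}"

definition configs :: "'a set \<Rightarrow> ('g \<Rightarrow> 'a) set" where
  "configs A = (UNIV :: 'g set) \<rightarrow> A"

definition shift :: "'g::group_add \<Rightarrow> ('g \<Rightarrow> 'a) \<Rightarrow> ('g \<Rightarrow> 'a)" where
  "shift \<gamma> x = (\<lambda>\<alpha>. x (- \<gamma> + \<alpha>))"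

definition Fix :: "'a set \<Rightarrow> 'g::group_add set \<Rightarrow> ('g \<Rightarrow> 'a) set" where
  "Fix A N = {x \<in> configs A. \<forall>\<gamma>\<in>N. shift \<gamma> x = x}"

text \<open>Prodiscrete uniform structure on A^\<Gamma> (all entourages).\<close>
definition config_entourages :: "'a set \<Rightarrow> (('g \<Rightarrow> 'a) \<times> ('g \<Rightarrow> 'a)) set set" where
  "config_entourages A = {V. V \<subseteq> configs A \<times> configs A \<and>
     (\<exists>F. finite F \<and> {(x, y). x \<in> configs A \<and> y \<in> configs A \<and> (\<forall>g\<in>F. x g = y g)} \<subseteq> V)}"

definition rel_nbhd :: "('b \<times> 'b) set \<Rightarrow> 'b set \<Rightarrow> 'b set" where
  "rel_nbhd V B = {x. \<exists>b\<in>B. (x, b) \<in> V}"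

definition hb_hat :: "'b set \<Rightarrow> ('b \<times> 'b) set \<Rightarrow> ('b set \<times> 'b set) set" where
  "hb_hat X V = {(B, C). B \<subseteq> X \<and> C \<subseteq> X \<and> C \<subseteq> rel_nbhd V B \<and> B \<subseteq> rel_nbhd V C}"

text \<open>Hausdorff-Bourbaki uniform structure on P(A^\<Gamma>) (all entourages).\<close>
definition hb_entourages :: "'a set \<Rightarrow> (('g \<Rightarrow> 'a) set \<times> ('g \<Rightarrow> 'a) set) set set" where
  "hb_entourages A = {W. W \<subseteq> Pow (configs A) \<times> Pow (configs A) \<and>
     (\<exists>V\<in>config_entourages A. hb_hat (configs A) V \<subseteq> W)}"

text \<open>Uniform structure on N(\<Gamma>) induced from the prodiscrete structure on P(\<Gamma>).\<close>
definition nsub_entourages :: "('g::group_add set \<times> 'g set) set set" where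
  "nsub_entourages = {U. U \<subseteq> normal_subgroups \<times> normal_subgroups \<and>
     (\<exists>F. finite F \<and> {(N1, N2). N1 \<in> normal_subgroups \<and> N2 \<in> normal_subgroups
                         \<and> N1 \<inter> F = N2 \<inter> F} \<subseteq> U)}"

definition unif_cont :: "'x set \<Rightarrow> ('x \<times> 'x) set set \<Rightarrow> ('y \<times> 'y) set set \<Rightarrow> ('x \<Rightarrow> 'y) \<Rightarrow> bool" where
  "unif_cont X EntX EntY f \<longleftrightarrow> (\<forall>W\<in>EntY. \<exists>U\<in>EntX. \<forall>x\<in>X. \<forall>y\<in>X. (x, y) \<in> U \<longrightarrow> (f x, f y) \<in> W)"

text \<open>Uniform embedding: injective and a uniform isomorphism onto its image
(with the subspace uniformity, whose entourages are W \<inter> (f`X \<times> f`X)).\<close>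
definition unif_embedding :: "'x set \<Rightarrow> ('x \<times> 'x) set set \<Rightarrow> ('y \<times> 'y) set set \<Rightarrow> ('x \<Rightarrow> 'y) \<Rightarrow> bool" where
  "unif_embedding X EntX EntY f \<longleftrightarrow> inj_on f X \<and> unif_cont X EntX EntY f \<and>
     (\<forall>U\<in>EntX. \<exists>W\<in>EntY. \<forall>x\<in>X. \<forall>y\<in>X. (f x, f y) \<in> W \<longrightarrow> (x, y) \<in> U)"

end

theory Submission
  imports Defs
begin

lemma ns_props:
  assumes "N \<in> normal_subgroups"
  shows "0 \<in> N" "\<And>x y. x\<in>N \<Longrightarrow> y\<in>N \<Longrightarrow> x + y \<in> N" "\<And>x. x\<in>N \<Longrightarrow> - x \<in> N"
  using assms unfolding normal_subgroups_def by auto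

lemma fix_app:
  assumes "x \<in> Fix A N" "g \<in> N"
  shows "x (- g + a) = x a"
proof -
  have "shift g x = x" using assms unfolding Fix_def by auto
  then show ?thesis unfolding shift_def by (metis)
qed

lemma fix_configs: "Fix A N \<subseteq> configs A" unfolding Fix_def by auto

lemma mem_shift:
  fixes N :: "'g::group_add set"
  assumes "N \<in> normal_subgroups" "g \<in> N"
  shows "(- g + a \<in> N) = (a \<in> N)"
proof
  assume h: "- g + a \<in> N"
  have "g + (- g + a) \<in> N" using ns_props[OF assms(1)] h assms(2) by blast
  then show "a \<in> N" by (simp add: add.assoc[symmetric])
next
  assume "a \<in> N"
  then show "- g + a \<in> N" using ns_props[OF assms(1)] assms(2) by blast
qed

lemma ind_fix:
  fixes N :: "'g::group_add set"
  assumes "N \<in> normal_subgroups" "a \<in> A" "b \<in> A"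
  shows "(\<lambda>t. if t \<in> N then a else b) \<in> Fix A N"
  unfolding Fix_def configs_def shift_def
  using assms mem_shift[OF assms(1)] by (auto simp: fun_eq_iff)

lemma sep:
  fixes N1 N2 :: "'g::group_add set"
  assumes "N2 \<in> normal_subgroups" "g \<in> N2" "y \<in> Fix A N2"
  shows "y 0 = y g"
  using fix_app[OF assms(3) assms(2), of g] by simp

lemma extend:
  fixes N1 N2 :: "'g::group_add set"
  assumes n1: "N1 \<in> normal_subgroups" and n2: "N2 \<in> normal_subgroups"
    and eq: "N1 \<inter> {b + - a | a b. a \<in> F \<and> b \<in> F} = N2 \<inter> {b + - a | a b. a \<in> F \<and> b \<in> F}"
    and x: "x \<in> Fix A N1"
  shows "\<exists>y\<in>Fix A N2. \<forall>g\<in>F. x g = y g"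
proof -
  define y where "y = (\<lambda>t. if \<exists>a\<in>F. t - a \<in> N2 then x (SOME a. a \<in> F \<and> t - a \<in> N2) else x 0)"
  have xc: "x \<in> configs A" using x fix_configs by blast
  have yc: "y \<in> configs A" using xc unfolding configs_def y_def by (auto simp: Pi_iff)
  have inv: "shift n y = y" if "n \<in> N2" for n
  proof -
    have "((- n + t) - a \<in> N2) = (t - a \<in> N2)" for t a
      using mem_shift[OF n2 that, of "t - a"] by (simp add: add_diff_eq)
    then have "y (- n + t) = y t" for t unfolding y_def by simp
    then show ?thesis unfolding shift_def by (intro ext) simp
  qed
  have agree: "x g = y g" if g: "g \<in> F" for g
  proof -
    have ex: "\<exists>a\<in>F. g - a \<in> N2" using g ns_props(1)[OF n2] by (intro bexI[of _ g]) auto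
    define a where "a = (SOME a. a \<in> F \<and> g - a \<in> N2)"
    have a: "a \<in> F \<and> g - a \<in> N2" unfolding a_def using someI_ex[of "\<lambda>a. a \<in> F \<and> g - a \<in> N2"] ex by blast
    then have "g + - a \<in> N2 \<inter> {b + - a | a b. a \<in> F \<and> b \<in> F}" using g by auto
    then have "g + - a \<in> N1" using eq by blast
    then have "x (- (g + - a) + g) = x g" using fix_app[OF x] by blast
    moreover have "- (g + - a) + g = a" by simp
    ultimately have "x g = x a" by simp
    moreover have "y g = x a" unfolding y_def a_def using ex by simp
    ultimately show ?thesis by simp
  qed
  have "y \<in> Fix A N2" unfolding Fix_def using yc inv by auto
  then show ?thesis using agree by blast
qed

lemma key_lemma:
  fixes N1 N2 :: "'g::group_add set"
  assumes ab: "a \<in> A" "b \<in> A" "a \<noteq> b"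
    and that: "N1 \<in> normal_subgroups" "N2 \<in> normal_subgroups" "g \<in> N2" "g \<notin> N1"
  shows "\<exists>x\<in>Fix A N1. \<forall>y\<in>Fix A N2. x 0 = y 0 \<longrightarrow> x g \<noteq> y g"
proof -
  define xx where "xx = (\<lambda>t. if t \<in> N1 then a else b)"
  have M: "xx \<in> Fix A N1" unfolding xx_def using ind_fix[OF that(1) ab(1,2)] .
  have x0: "xx 0 = a" unfolding xx_def using ns_props(1)[OF that(1)] by simp
  have xg: "xx g = b" unfolding xx_def using that(4) by simp
  have P: "\<forall>y\<in>Fix A N2. xx 0 = y 0 \<longrightarrow> xx g \<noteq> y g"
  proof (intro ballI impI)
    fix y assume y: "y \<in> Fix A N2" and e: "xx 0 = y 0"
    have "y 0 = y g" by (rule sep[OF that(2,3) y])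
    then have "y g = a" using e x0 by metis
    then show "xx g \<noteq> y g" using xg ab(3) by metis
  qed
  show ?thesis by (rule bexI[OF _ M]) (rule P)
qed

lemma third_lemma:
  fixes U :: "('g::group_add set \<times> 'g set) set" and A :: "'a set"
  assumes ab: "a \<in> A" "b \<in> A" "a \<noteq> b"
  and Uent: "U \<in> nsub_entourages"
  shows "\<exists>W\<in>hb_entourages A. \<forall>x\<in>normal_subgroups. \<forall>y\<in>normal_subgroups.
        (Fix A x, Fix A y) \<in> W \<longrightarrow> (x, y) \<in> U"
proof -
  have "\<exists>F. finite F \<and> {(N1, N2). N1 \<in> normal_subgroups \<and> N2 \<in> normal_subgroups
                         \<and> N1 \<inter> F = N2 \<inter> F} \<subseteq> U"
    using conjunct2[OF Uent[unfolded nsub_entourages_def mem_Collect_eq]] .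
  then obtain F :: "'g set" where F: "finite F" and FU: "{(N1, N2). N1 \<in> normal_subgroups \<and> N2 \<in> normal_subgroups
                         \<and> N1 \<inter> F = N2 \<inter> F} \<subseteq> U"
    by (elim exE conjE)
  define V where "V = {(x, y). x \<in> configs A \<and> y \<in> configs A \<and> (\<forall>g\<in>insert 0 F. x g = y g)}"
  have FV: "finite (insert 0 F)" using F by simp
  have "V \<in> config_entourages A" unfolding config_entourages_def
    apply (rule CollectI, rule conjI)
     apply (force simp: V_def)
    apply (rule exI[of _ "insert 0 F"])
    using FV by (simp add: V_def)
  moreover have "hb_hat (configs A) V \<subseteq> Pow (configs A) \<times> Pow (configs A)"
    unfolding hb_hat_def by auto
  ultimately have Wm: "hb_hat (configs A) V \<in> hb_entourages A"
    unfolding hb_entourages_def by blast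
  have one: False if n: "N1 \<in> normal_subgroups" "N2 \<in> normal_subgroups"
    and sub: "Fix A N1 \<subseteq> rel_nbhd V (Fix A N2)" and g: "g \<in> F" "g \<in> N2" "g \<notin> N1" for N1 N2 :: "'g set" and g
  proof -
    obtain x where x: "x \<in> Fix A N1" "\<forall>y\<in>Fix A N2. x 0 = y 0 \<longrightarrow> x g \<noteq> y g"
      using key_lemma[OF ab n g(2,3)] by blast
    have "x \<in> rel_nbhd V (Fix A N2)" using sub x(1) by blast
    then obtain y where "y \<in> Fix A N2" "(x, y) \<in> V" unfolding rel_nbhd_def by blast
    then show False using x(2) g(1) unfolding V_def by auto
  qed
  have "(N1, N2) \<in> U" if n: "N1 \<in> normal_subgroups" "N2 \<in> normal_subgroups"
    and h: "(Fix A N1, Fix A N2) \<in> hb_hat (configs A) V" for N1 N2 :: "'g set"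
  proof -
    have s1: "Fix A N1 \<subseteq> rel_nbhd V (Fix A N2)" and s2: "Fix A N2 \<subseteq> rel_nbhd V (Fix A N1)"
      using h unfolding hb_hat_def by auto
    have "N1 \<inter> F = N2 \<inter> F" using one[OF n s1] one[OF n(2,1) s2] by blast
    then show ?thesis by (intro subsetD[OF FU]) (use n in simp)
  qed
  then show ?thesis using Wm by blast
qed
theorem theorem6p3:
  fixes A :: "'a set"
  shows "unif_cont (normal_subgroups :: 'g::group_add set set) nsub_entourages (hb_entourages A) (Fix A)
     \<and> ((\<exists>a\<in>A. \<exists>b\<in>A. a \<noteq> b) \<longrightarrow>
          unif_embedding (normal_subgroups :: 'g set set) nsub_entourages (hb_entourages A) (Fix A))"
proof -
  have uc: "unif_cont (normal_subgroups :: 'g set set) nsub_entourages (hb_entourages A) (Fix A)"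
    unfolding unif_cont_def
  proof
    fix W :: "(('g \<Rightarrow> 'a) set \<times> ('g \<Rightarrow> 'a) set) set"
    assume "W \<in> hb_entourages A"
    then obtain V where V: "V \<in> config_entourages A" and W: "hb_hat (configs A) V \<subseteq> W"
      unfolding hb_entourages_def by blast
    then obtain F where F: "finite F"
      and FV: "{(x, y). x \<in> configs A \<and> y \<in> configs A \<and> (\<forall>g\<in>F. x g = y g)} \<subseteq> V"
      unfolding config_entourages_def by blast
    define E where "E = {b + - a | a b. a \<in> F \<and> b \<in> F}"
    have fE: "finite E"
    proof -
      have "E = (\<lambda>(a,b). b + - a) ` (F \<times> F)" unfolding E_def by auto
      then show ?thesis using F by simp
    qed
    define U where "U = {(N1, N2). N1 \<in> (normal_subgroups :: 'g set set) \<and> N2 \<in> normal_subgroups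
                         \<and> N1 \<inter> E = N2 \<inter> E}"
    have "U \<in> nsub_entourages" unfolding nsub_entourages_def U_def using fE by blast
    moreover have "(Fix A N1, Fix A N2) \<in> W" if "(N1, N2) \<in> U" for N1 N2
    proof -
      have h: "N1 \<in> normal_subgroups" "N2 \<in> normal_subgroups" "N1 \<inter> E = N2 \<inter> E"
        using that unfolding U_def by auto
      have s1: "Fix A N1 \<subseteq> rel_nbhd V (Fix A N2)"
      proof
        fix x assume x: "x \<in> Fix A N1"
        have "\<exists>y\<in>Fix A N2. \<forall>g\<in>F. x g = y g"
          by (rule extend[OF h(1,2) _ x]) (use h(3) in \<open>simp add: E_def\<close>)
        then obtain y where y: "y \<in> Fix A N2" "\<forall>g\<in>F. x g = y g" by blast
        have "(x, y) \<in> V"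
          by (rule subsetD[OF FV]) (use y x fix_configs in auto)
        then show "x \<in> rel_nbhd V (Fix A N2)" unfolding rel_nbhd_def using y(1) by blast
      qed
      have s2: "Fix A N2 \<subseteq> rel_nbhd V (Fix A N1)"
      proof
        fix x assume x: "x \<in> Fix A N2"
        have "\<exists>y\<in>Fix A N1. \<forall>g\<in>F. x g = y g"
          by (rule extend[OF h(2,1) _ x]) (use h(3) in \<open>simp add: E_def\<close>)
        then obtain y where y: "y \<in> Fix A N1" "\<forall>g\<in>F. x g = y g" by blast
        have "(x, y) \<in> V"
          by (rule subsetD[OF FV]) (use y x fix_configs in auto)
        then show "x \<in> rel_nbhd V (Fix A N1)" unfolding rel_nbhd_def using y(1) by blast
      qed
      have "(Fix A N1, Fix A N2) \<in> hb_hat (configs A) V"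
        unfolding hb_hat_def using s1 s2 fix_configs[of A N1] fix_configs[of A N2] by simp
      then show ?thesis using W by blast
    qed
    ultimately show "\<exists>U\<in>nsub_entourages. \<forall>x\<in>normal_subgroups. \<forall>y\<in>normal_subgroups.
       (x, y) \<in> U \<longrightarrow> (Fix A x, Fix A y) \<in> W" by blast
  qed
  have emb: "unif_embedding (normal_subgroups :: 'g set set) nsub_entourages (hb_entourages A) (Fix A)"
    if ab: "\<exists>a\<in>A. \<exists>b\<in>A. a \<noteq> b"
  proof -
    obtain a b where ab: "a \<in> A" "b \<in> A" "a \<noteq> b" using ab by blast
    have key: "\<exists>x\<in>Fix A N1. \<forall>y\<in>Fix A N2. x 0 = y 0 \<longrightarrow> x g \<noteq> y g"
      if "N1 \<in> normal_subgroups" "N2 \<in> normal_subgroups" "g \<in> N2" "g \<notin> N1"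
      for N1 N2 :: "'g set" and g
    proof -
      define xx where "xx = (\<lambda>t. if t \<in> N1 then a else b)"
      have M: "xx \<in> Fix A N1" unfolding xx_def using ind_fix[OF that(1) ab(1,2)] .
      have P: "\<forall>y\<in>Fix A N2. xx 0 = y 0 \<longrightarrow> xx g \<noteq> y g"
        unfolding xx_def using sep[OF that(2,3)] that ns_props(1)[OF that(1)] ab(3) by auto
      show ?thesis using P M by blast
    qed
    have inj: "inj_on (Fix A) (normal_subgroups :: 'g set set)"
    proof (rule inj_onI)
      fix N1 N2 :: "'g set"
      assume n: "N1 \<in> normal_subgroups" "N2 \<in> normal_subgroups" and e: "Fix A N1 = Fix A N2"
      show "N1 = N2"
      proof (rule ccontr)
        assume "N1 \<noteq> N2"
        then obtain g where "(g \<in> N2 \<and> g \<notin> N1) \<or> (g \<in> N1 \<and> g \<notin> N2)" by blast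
        then show False
          using key[OF n(1,2), of g] key[OF n(2,1), of g] e by blast
      qed
    qed
    have third: "\<exists>W\<in>hb_entourages A. \<forall>x\<in>normal_subgroups. \<forall>y\<in>normal_subgroups.
        (Fix A x, Fix A y) \<in> W \<longrightarrow> (x, y) \<in> U" if Uent: "U \<in> nsub_entourages" for U :: "('g set \<times> 'g set) set"
      by (rule third_lemma[OF ab Uent])
    show ?thesis unfolding unif_embedding_def
    proof (intro conjI inj uc ballI)
      fix U assume "U \<in> (nsub_entourages :: ('g set \<times> 'g set) set set)"
      then show "\<exists>W\<in>hb_entourages A. \<forall>x\<in>normal_subgroups. \<forall>y\<in>normal_subgroups.
        (Fix A x, Fix A y) \<in> W \<longrightarrow> (x, y) \<in> U" by (rule third)
    qed
  qed
  show ?thesis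
  proof (intro conjI impI)
    show "unif_cont (normal_subgroups :: 'g set set) nsub_entourages (hb_entourages A) (Fix A)" by (rule uc)
  next
    assume "\<exists>a\<in>A. \<exists>b\<in>A. a \<noteq> b"
    then show "unif_embedding (normal_subgroups :: 'g set set) nsub_entourages (hb_entourages A) (Fix A)"
      by (rule emb)
  qed
qed

end
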